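(* Let $r\ge 2$ and $k\ge 3$ be integers and let $\widehat{F}_k$ be any $r$-coloring of the complete graph $K_k$. For every natural number $n$, there exists a complete multipartite graph on $n$ vertices which is $(r,\widehat{F}_k)$-extremal.
   Context: All graphs are finite and simple. An $r$-coloring of a graph is an arbitrary (not necessarily proper) assignment of colors from $\{1,\dots,r\}$ to its edges. The pattern of a colored graph is the partition of its edge set into (nonempty) color classes; names of colors are ignored. Given an $r$-coloring of a graph $G$, a copy of $\widehat{F}_k$ is a set of $k$ pairwise adjacent vertices of $G$ such that there is a bijection from these vertices to $V(K_k)$ under which two edges receive the same color in $G$ if and only if their images receive the same color in $\widehat{F}_k$ (i.e., the induced color pattern is isomorphic to that of $\widehat{F}_k$). A coloring of $G$ is $\widehat{F}_k$-free if it contains no copy of $\widehat{F}_k$. $c_{r,\widehat{F}_k}(G)$ denotes the number of $\widehat{F}_k$-free $r$-colorings of $E(G)$, and $c_{r,\widehat{F}_k}(n)$ is the maximum of $c_{r,\widehat{F}_k}(G)$ over all graphs $G$ on $n$ vertices. A graph $G$ on $n$ vertices is $(r,\widehat{F}_k)$-extremal if $c_{r,\widehat{F}_k}(G)=c_{r,\widehat{F}_k}(n)$. *)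

theory Defs
  imports "HOL-Library.FuncSet"
begin

definition pairs :: "'a set \<Rightarrow> 'a set set" where
  "pairs V = {e. e \<subseteq> V \<and> card e = 2}"

definition graph_on :: "nat \<Rightarrow> nat set set \<Rightarrow> bool" where
  "graph_on n E \<longleftrightarrow> E \<subseteq> pairs {..<n}"

definition colorings :: "nat \<Rightarrow> 'a set set \<Rightarrow> ('a set \<Rightarrow> nat) set" where
  "colorings r E = E \<rightarrow>\<^sub>E {1..r}"

definition has_copy :: "nat \<Rightarrow> (nat set \<Rightarrow> nat) \<Rightarrow> nat set set \<Rightarrow> (nat set \<Rightarrow> nat) \<Rightarrow> bool" where
  "has_copy k F E c \<longleftrightarrow>
     (\<exists>S phi. card S = k \<and> pairs S \<subseteq> E \<and> bij_betw phi S {..<k} \<and>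
        (\<forall>e\<in>pairs S. \<forall>e'\<in>pairs S. (c e = c e') \<longleftrightarrow> (F (phi ` e) = F (phi ` e'))))"

definition count_free :: "nat \<Rightarrow> nat \<Rightarrow> (nat set \<Rightarrow> nat) \<Rightarrow> nat set set \<Rightarrow> nat" where
  "count_free r k F E = card {c \<in> colorings r E. \<not> has_copy k F E c}"

definition max_count_free :: "nat \<Rightarrow> nat \<Rightarrow> (nat set \<Rightarrow> nat) \<Rightarrow> nat \<Rightarrow> nat" where
  "max_count_free r k F n = Max (count_free r k F ` {E. graph_on n E})"

definition extremal :: "nat \<Rightarrow> nat \<Rightarrow> (nat set \<Rightarrow> nat) \<Rightarrow> nat \<Rightarrow> nat set set \<Rightarrow> bool" where
  "extremal r k F n E \<longleftrightarrow> graph_on n E \<and> count_free r k F E = max_count_free r k F n"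

definition complete_multipartite :: "nat \<Rightarrow> nat set set \<Rightarrow> bool" where
  "complete_multipartite n E \<longleftrightarrow>
     (\<exists>p :: nat \<Rightarrow> nat. E = {{u, v} | u v. u < n \<and> v < n \<and> p u \<noteq> p v})"

end

theory Submission
  imports Defs
begin

lemma L1:
  fixes P :: "'a set set \<Rightarrow> ('a set \<Rightarrow> nat) \<Rightarrow> bool" and H1 H2 :: "'a set set"
  assumes fin1: "finite H1" and fin2: "finite H2"
    and loc: "\<And>H c c'. (\<And>e. e \<in> H \<Longrightarrow> c e = c' e) \<Longrightarrow> P H c = P H c'"
    and split: "\<And>c. P (H1 \<union> H2) c \<longleftrightarrow> P H1 c \<or> P H2 c"
  shows "card {c \<in> colorings r (H1 \<union> H2). \<not> P (H1 \<union> H2) c} =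
    (\<Sum>c0\<in>colorings r (H1 \<inter> H2).
        card {c \<in> colorings r H1. \<not> P H1 c \<and> restrict c (H1 \<inter> H2) = c0} *
        card {c \<in> colorings r H2. \<not> P H2 c \<and> restrict c (H1 \<inter> H2) = c0})"
proof -
  define X where "X = {c \<in> colorings r (H1 \<union> H2). \<not> P (H1 \<union> H2) c}"
  define Y where "Y = (\<lambda>c0. {c \<in> X. restrict c (H1 \<inter> H2) = c0})"
  define f1 where "f1 = (\<lambda>c0. {c \<in> colorings r H1. \<not> P H1 c \<and> restrict c (H1 \<inter> H2) = c0})"
  define f2 where "f2 = (\<lambda>c0. {c \<in> colorings r H2. \<not> P H2 c \<and> restrict c (H1 \<inter> H2) = c0})"
  have finX: "finite X" unfolding X_def colorings_def
    using fin1 fin2 by (intro finite_subset[OF _ finite_PiE[of "H1 \<union> H2" "\<lambda>_. {1..r}"]]) auto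
  have XU: "X = (\<Union>c0\<in>colorings r (H1 \<inter> H2). Y c0)"
    unfolding Y_def X_def colorings_def by (auto simp: PiE_iff)
  have "card X = (\<Sum>c0\<in>colorings r (H1 \<inter> H2). card (Y c0))"
    unfolding XU
    apply (rule card_UN_disjoint)
    using fin1 fin2 finX unfolding colorings_def Y_def
      apply (auto intro: finite_PiE)
    done
  also have "\<dots> = (\<Sum>c0\<in>colorings r (H1 \<inter> H2). card (f1 c0) * card (f2 c0))"
  proof (rule sum.cong[OF refl])
    fix c0 assume c0: "c0 \<in> colorings r (H1 \<inter> H2)"
    have "bij_betw (\<lambda>c. (restrict c H1, restrict c H2)) (Y c0) (f1 c0 \<times> f2 c0)"
    proof (rule bij_betw_byWitness[where f' = "\<lambda>(c1, c2). (\<lambda>e. if e \<in> H1 then c1 e else if e \<in> H2 then c2 e else undefined)"])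
      show "\<forall>a\<in>Y c0. (\<lambda>(c1, c2). (\<lambda>e. if e \<in> H1 then c1 e else if e \<in> H2 then c2 e else undefined)) (restrict a H1, restrict a H2) = a"
        unfolding Y_def X_def colorings_def by (auto simp: PiE_iff extensional_def fun_eq_iff)
      show "\<forall>a'\<in>f1 c0 \<times> f2 c0. (\<lambda>c. (restrict c H1, restrict c H2)) ((\<lambda>(c1, c2). (\<lambda>e. if e \<in> H1 then c1 e else if e \<in> H2 then c2 e else undefined)) a') = a'"
      proof
        fix a' assume a': "a' \<in> f1 c0 \<times> f2 c0"
        obtain c1 c2 where a'e: "a' = (c1, c2)" by fastforce
        have "c1 \<in> colorings r H1" "c2 \<in> colorings r H2" "restrict c1 (H1 \<inter> H2) = restrict c2 (H1 \<inter> H2)"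
          using a' a'e unfolding f1_def f2_def by auto
        then show "(\<lambda>c. (restrict c H1, restrict c H2)) ((\<lambda>(c1, c2). (\<lambda>e. if e \<in> H1 then c1 e else if e \<in> H2 then c2 e else undefined)) a') = a'"
          unfolding a'e colorings_def
          by (auto simp: PiE_iff extensional_def fun_eq_iff restrict_def) metis+
      qed
      show "(\<lambda>c. (restrict c H1, restrict c H2)) ` Y c0 \<subseteq> f1 c0 \<times> f2 c0"
      proof
        fix y assume "y \<in> (\<lambda>c. (restrict c H1, restrict c H2)) ` Y c0"
        then obtain c where c: "c \<in> Y c0" and y: "y = (restrict c H1, restrict c H2)" by blast
        have cc: "c \<in> colorings r (H1 \<union> H2)" "\<not> P (H1 \<union> H2) c" "restrict c (H1 \<inter> H2) = c0"
          using c unfolding Y_def X_def by auto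
        have "\<not> P H1 c" "\<not> P H2 c" using cc split by auto
        moreover have "P H1 (restrict c H1) = P H1 c" "P H2 (restrict c H2) = P H2 c"
          by (rule loc; simp)+
        moreover have "restrict (restrict c H1) (H1 \<inter> H2) = c0" "restrict (restrict c H2) (H1 \<inter> H2) = c0"
          unfolding cc(3)[symmetric] by (auto simp: fun_eq_iff)
        moreover have "restrict c H1 \<in> colorings r H1" "restrict c H2 \<in> colorings r H2"
          using cc(1) unfolding colorings_def by (auto simp: PiE_iff)
        ultimately show "y \<in> f1 c0 \<times> f2 c0" unfolding y f1_def f2_def by auto
      qed
      show "(\<lambda>(c1, c2). (\<lambda>e. if e \<in> H1 then c1 e else if e \<in> H2 then c2 e else undefined)) ` (f1 c0 \<times> f2 c0) \<subseteq> Y c0"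
      proof
        fix y assume "y \<in> (\<lambda>(c1, c2). (\<lambda>e. if e \<in> H1 then c1 e else if e \<in> H2 then c2 e else undefined)) ` (f1 c0 \<times> f2 c0)"
        then obtain c1 c2 where c12: "c1 \<in> f1 c0" "c2 \<in> f2 c0"
          and y: "y = (\<lambda>e. if e \<in> H1 then c1 e else if e \<in> H2 then c2 e else undefined)" by auto
        have h: "c1 \<in> colorings r H1" "c2 \<in> colorings r H2" "\<not> P H1 c1" "\<not> P H2 c2"
          "restrict c1 (H1 \<inter> H2) = c0" "restrict c2 (H1 \<inter> H2) = c0"
          using c12 unfolding f1_def f2_def by auto
        have agree: "\<And>e. e \<in> H1 \<inter> H2 \<Longrightarrow> c1 e = c2 e"
          using h(5,6) by (metis restrict_apply')
        have "P H1 y = P H1 c1" by (rule loc) (simp add: y)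
        moreover have "P H2 y = P H2 c2" by (rule loc) (auto simp: y agree)
        ultimately have "\<not> P (H1 \<union> H2) y" using split h by auto
        moreover have "y \<in> colorings r (H1 \<union> H2)" using h(1,2) unfolding colorings_def y
          by (auto simp: PiE_iff extensional_def)
        moreover have "restrict y (H1 \<inter> H2) = c0" unfolding h(5)[symmetric] by (auto simp: y fun_eq_iff)
        ultimately show "y \<in> Y c0" unfolding Y_def X_def by auto
      qed
    qed
    then show "card (Y c0) = card (f1 c0) * card (f2 c0)"
      by (simp add: bij_betw_same_card card_cartesian_product)
  qed
  finally show ?thesis unfolding X_def f1_def f2_def .
qed

lemma pairs_iff: "e \<in> pairs S \<longleftrightarrow> e \<subseteq> S \<and> card e = 2"
  by (simp add: pairs_def)

lemma has_copy_loc: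
  assumes "\<And>e. e \<in> H \<Longrightarrow> c e = c' e"
  shows "has_copy k F H c = has_copy k F H c'"
proof -
  have "\<And>S. pairs S \<subseteq> H \<Longrightarrow> (\<forall>e\<in>pairs S. \<forall>e'\<in>pairs S. (c e = c e') \<longleftrightarrow> (c' e = c' e'))"
    using assms by (metis subsetD)
  then show ?thesis unfolding has_copy_def by metis
qed

lemma has_copy_mono: "has_copy k F H c \<Longrightarrow> H \<subseteq> H' \<Longrightarrow> has_copy k F H' c"
  unfolding has_copy_def by blast

lemma has_copy_split:
  assumes uv: "u \<noteq> v" and h1: "\<forall>e\<in>H1. v \<notin> e" and h2: "\<forall>e\<in>H2. u \<notin> e"
    and s1: "{e\<in>H1. u \<notin> e} \<subseteq> H2" and s2: "{e\<in>H2. v \<notin> e} \<subseteq> H1"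
  shows "has_copy k F (H1 \<union> H2) c \<longleftrightarrow> has_copy k F H1 c \<or> has_copy k F H2 c"
proof
  assume "has_copy k F (H1 \<union> H2) c"
  then obtain S phi where S: "card S = k" "pairs S \<subseteq> H1 \<union> H2" "bij_betw phi S {..<k}"
    "\<forall>e\<in>pairs S. \<forall>e'\<in>pairs S. (c e = c e') \<longleftrightarrow> (F (phi ` e) = F (phi ` e'))"
    unfolding has_copy_def by blast
  consider "u \<in> S \<and> v \<in> S" | "v \<notin> S" | "u \<notin> S" by blast
  then show "has_copy k F H1 c \<or> has_copy k F H2 c"
  proof cases
    case 1
    then have "{u, v} \<in> pairs S" using uv by (simp add: pairs_iff)
    then have "{u,v} \<in> H1 \<union> H2" using S(2) by blast
    then show ?thesis using h1 h2 by blast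
  next
    case 2
    have "pairs S \<subseteq> H1"
    proof
      fix e assume e: "e \<in> pairs S"
      then have "v \<notin> e" using 2 by (auto simp: pairs_iff)
      then show "e \<in> H1" using e S(2) s2 by blast
    qed
    then have "has_copy k F H1 c" unfolding has_copy_def using S by blast
    then show ?thesis by blast
  next
    case 3
    have "pairs S \<subseteq> H2"
    proof
      fix e assume e: "e \<in> pairs S"
      then have "u \<notin> e" using 3 by (auto simp: pairs_iff)
      then show "e \<in> H2" using e S(2) s1 by blast
    qed
    then have "has_copy k F H2 c" unfolding has_copy_def using S by blast
    then show ?thesis by blast
  qed
next
  assume "has_copy k F H1 c \<or> has_copy k F H2 c"
  then show "has_copy k F (H1 \<union> H2) c" using has_copy_mono by blast
qed

lemma has_copy_relabel:
  assumes inv: "\<And>x. g (g x) = x"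
    and hc: "has_copy k F ((`) g ` H) c"
  shows "has_copy k F H (c \<circ> (`) g)"
proof -
  obtain S phi where S: "card S = k" "pairs S \<subseteq> (`) g ` H" "bij_betw phi S {..<k}"
    "\<forall>e\<in>pairs S. \<forall>e'\<in>pairs S. (c e = c e') \<longleftrightarrow> (F (phi ` e) = F (phi ` e'))"
    using hc unfolding has_copy_def by blast
  have injg: "inj g" by (metis inj_def inv)
  have gg: "\<And>A. g ` g ` A = A" using inv by (simp add: image_image)
  have injG: "inj ((`) g)" by (metis gg inj_def)
  have pairsg: "\<And>e. e \<in> pairs (g ` S) \<longleftrightarrow> g ` e \<in> pairs S"
  proof -
    fix e
    have "e \<subseteq> g ` S \<longleftrightarrow> g ` e \<subseteq> S" by (metis gg image_mono)
    moreover have "card (g ` e) = card e" using injg by (simp add: card_image inj_on_subset)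
    ultimately show "e \<in> pairs (g ` S) \<longleftrightarrow> g ` e \<in> pairs S" by (simp add: pairs_iff)
  qed
  have "card (g ` S) = k" using S(1) injg by (simp add: card_image inj_on_subset)
  moreover have "pairs (g ` S) \<subseteq> H"
  proof
    fix e assume "e \<in> pairs (g ` S)"
    then have "g ` e \<in> (`) g ` H" using pairsg S(2) by blast
    then show "e \<in> H" using injG by (simp add: inj_image_mem_iff)
  qed
  moreover have "bij_betw (phi \<circ> g) (g ` S) {..<k}"
  proof (rule bij_betw_trans[OF _ S(3)])
    show "bij_betw g (g ` S) S"
      by (metis bij_betw_imageI gg injg inj_on_subset subset_UNIV)
  qed
  moreover have "\<forall>e\<in>pairs (g ` S). \<forall>e'\<in>pairs (g ` S). ((c \<circ> (`) g) e = (c \<circ> (`) g) e') \<longleftrightarrow> (F ((phi \<circ> g) ` e) = F ((phi \<circ> g) ` e'))"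
    using S(4) pairsg by (simp add: image_comp)
  ultimately show ?thesis unfolding has_copy_def by blast
qed

lemma has_copy_relabel_iff:
  assumes inv: "\<And>x. g (g x) = x"
  shows "has_copy k F ((`) g ` H) c \<longleftrightarrow> has_copy k F H (c \<circ> (`) g)"
proof
  assume "has_copy k F ((`) g ` H) c" then show "has_copy k F H (c \<circ> (`) g)"
    using has_copy_relabel[OF inv] by blast
next
  assume a: "has_copy k F H (c \<circ> (`) g)"
  have gg: "\<And>A. g ` g ` A = A" using inv by (simp add: image_image)
  have "H = (`) g ` (`) g ` H" by (simp add: gg image_comp comp_def inv)
  with a have "has_copy k F ((`) g ` ((`) g ` H)) (c \<circ> (`) g)" by simp
  then have "has_copy k F ((`) g ` H) ((c \<circ> (`) g) \<circ> (`) g)"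
    using has_copy_relabel[OF inv] by blast
  moreover have "(c \<circ> (`) g) \<circ> (`) g = c" by (simp add: fun_eq_iff gg)
  ultimately show "has_copy k F ((`) g ` H) c" by simp
qed

lemma fiber_relabel:
  assumes inv: "\<And>x. g (g x) = x" and E0G: "E0 \<subseteq> G" and fix0: "\<And>e. e \<in> E0 \<Longrightarrow> g ` e = e"
  shows "card {c \<in> colorings r ((`) g ` G). \<not> has_copy k F ((`) g ` G) c \<and> restrict c E0 = c0}
       = card {c \<in> colorings r G. \<not> has_copy k F G c \<and> restrict c E0 = c0}"
proof -
  have gg: "\<And>A. g ` g ` A = A" using inv by (simp add: image_image)
  have injG: "inj ((`) g)" by (metis gg inj_def)
  let ?A = "{c \<in> colorings r ((`) g ` G). \<not> has_copy k F ((`) g ` G) c \<and> restrict c E0 = c0}"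
  let ?B = "{c \<in> colorings r G. \<not> has_copy k F G c \<and> restrict c E0 = c0}"
  have "bij_betw (\<lambda>c. restrict (c \<circ> (`) g) G) ?A ?B"
  proof (rule bij_betw_byWitness[where f' = "\<lambda>c. restrict (c \<circ> (`) g) ((`) g ` G)"])
    show "\<forall>a\<in>?A. restrict (restrict (a \<circ> (`) g) G \<circ> (`) g) ((`) g ` G) = a"
      unfolding colorings_def by (auto simp: fun_eq_iff PiE_iff extensional_def gg)
    show "\<forall>a\<in>?B. restrict (restrict (a \<circ> (`) g) ((`) g ` G) \<circ> (`) g) G = a"
      unfolding colorings_def by (auto simp: fun_eq_iff PiE_iff extensional_def gg)
    show "(\<lambda>c. restrict (c \<circ> (`) g) G) ` ?A \<subseteq> ?B"
    proof
      fix y assume "y \<in> (\<lambda>c. restrict (c \<circ> (`) g) G) ` ?A"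
      then obtain c where c: "c \<in> colorings r ((`) g ` G)" "\<not> has_copy k F ((`) g ` G) c"
        "restrict c E0 = c0" and y: "y = restrict (c \<circ> (`) g) G" by blast
      have "y \<in> colorings r G" using c(1) unfolding y colorings_def by (auto simp: PiE_iff)
      moreover have "has_copy k F G y = has_copy k F G (c \<circ> (`) g)"
        by (rule has_copy_loc) (simp add: y)
      moreover have "has_copy k F G (c \<circ> (`) g) = has_copy k F ((`) g ` G) c"
        using has_copy_relabel_iff[OF inv] by blast
      moreover have "restrict y E0 = c0"
        unfolding c(3)[symmetric] y using E0G fix0 by (auto simp: fun_eq_iff)
      ultimately show "y \<in> ?B" using c(2) by auto
    qed
    show "(\<lambda>c. restrict (c \<circ> (`) g) ((`) g ` G)) ` ?B \<subseteq> ?A"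
    proof
      fix y assume "y \<in> (\<lambda>c. restrict (c \<circ> (`) g) ((`) g ` G)) ` ?B"
      then obtain c where c: "c \<in> colorings r G" "\<not> has_copy k F G c"
        "restrict c E0 = c0" and y: "y = restrict (c \<circ> (`) g) ((`) g ` G)" by blast
      have "y \<in> colorings r ((`) g ` G)" using c(1) unfolding y colorings_def by (auto simp: PiE_iff gg)
      moreover have "has_copy k F ((`) g ` G) y = has_copy k F G (y \<circ> (`) g)"
        using has_copy_relabel_iff[OF inv] by blast
      moreover have "has_copy k F G (y \<circ> (`) g) = has_copy k F G c"
        by (rule has_copy_loc) (simp add: y gg)
      moreover have "restrict y E0 = c0"
      proof -
        have "\<And>e. e \<in> E0 \<Longrightarrow> e \<in> (`) g ` G"
          using E0G fix0 by (metis image_eqI subsetD)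
        then show ?thesis unfolding c(3)[symmetric] y using fix0 by (auto simp: fun_eq_iff)
      qed
      ultimately show "y \<in> ?A" using c(2) by auto
    qed
  qed
  then show ?thesis by (simp add: bij_betw_same_card)
qed

definition sw :: "nat \<Rightarrow> nat \<Rightarrow> nat \<Rightarrow> nat" where
  "sw u v x = (if x = u then v else if x = v then u else x)"

definition clone :: "nat set set \<Rightarrow> nat \<Rightarrow> nat \<Rightarrow> nat set set" where
  "clone E u v = {e\<in>E. v \<notin> e} \<union> (`) (sw u v) ` {e\<in>E. v \<notin> e}"

lemma sw_inv: "sw u v (sw u v x) = x" by (simp add: sw_def)
lemma sw_comm: "sw v u = sw u v" by (auto simp: sw_def fun_eq_iff)
lemma sw_fix: "u \<notin> e \<Longrightarrow> v \<notin> e \<Longrightarrow> sw u v ` e = e"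
  by (force simp: sw_def)
lemma sw_mem1: "u \<in> sw u v ` h \<longleftrightarrow> v \<in> h" by (force simp: sw_def)
lemma sw_mem2: "v \<in> sw u v ` h \<longleftrightarrow> u \<in> h" by (force simp: sw_def)

lemma key_ineq:
  assumes uv: "u \<noteq> v" and finE: "finite E" and nuv: "{u,v} \<notin> E" and c2: "\<forall>e\<in>E. card e = 2"
  shows "2 * count_free r k F E \<le> count_free r k F (clone E u v) + count_free r k F (clone E v u)"
proof -
  define g where "g = sw u v"
  define G1 where "G1 = {e\<in>E. v \<notin> e}"
  define G2 where "G2 = {e\<in>E. u \<notin> e}"
  define E0 where "E0 = {e\<in>E. u \<notin> e \<and> v \<notin> e}"
  let ?P = "has_copy k F"
  have inv: "\<And>x. g (g x) = x" by (simp add: g_def sw_inv)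
  have loc: "\<And>H c c'. (\<And>e. e \<in> H \<Longrightarrow> c e = c' e) \<Longrightarrow> ?P H c = ?P H c'"
    by (rule has_copy_loc)
  have fix0: "\<And>e. e \<in> E0 \<Longrightarrow> g ` e = e" unfolding E0_def g_def using sw_fix by blast
  have m1: "\<And>h. u \<in> g ` h \<longleftrightarrow> v \<in> h" unfolding g_def by (rule sw_mem1)
  have m2: "\<And>h. v \<in> g ` h \<longleftrightarrow> u \<in> h" unfolding g_def by (rule sw_mem2)
  have fin1: "finite G1" "finite G2" "finite E0" using finE unfolding G1_def G2_def E0_def by auto
  have EU: "E = G1 \<union> G2"
  proof -
    have "\<And>e. e \<in> E \<Longrightarrow> u \<in> e \<Longrightarrow> v \<in> e \<Longrightarrow> False"
    proof -
      fix e assume e: "e \<in> E" "u \<in> e" "v \<in> e"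
      have "{u,v} \<subseteq> e" using e by auto
      moreover have "card {u,v} = card e" using e(1) c2 uv by auto
      moreover have "finite e" using e(1) c2 card.infinite by fastforce
      ultimately have "{u,v} = e" by (simp add: card_subset_eq)
      then show False using nuv e(1) by simp
    qed
    then show ?thesis unfolding G1_def G2_def by blast
  qed
  have EI: "G1 \<inter> G2 = E0" unfolding G1_def G2_def E0_def by auto
  define a where "a = (\<lambda>c0. card {c \<in> colorings r G1. \<not> ?P G1 c \<and> restrict c E0 = c0})"
  define b where "b = (\<lambda>c0. card {c \<in> colorings r G2. \<not> ?P G2 c \<and> restrict c E0 = c0})"
  have cE: "count_free r k F E = (\<Sum>c0\<in>colorings r E0. a c0 * b c0)"
  proof -
    have sp: "\<And>c. ?P (G1 \<union> G2) c \<longleftrightarrow> ?P G1 c \<or> ?P G2 c"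
      by (rule has_copy_split[OF uv]) (auto simp: G1_def G2_def)
    show ?thesis using L1[of G1 G2 ?P r, OF fin1(1,2) loc sp]
      unfolding count_free_def EU[symmetric] EI a_def b_def by simp
  qed
  have cU: "count_free r k F (clone E u v) = (\<Sum>c0\<in>colorings r E0. a c0 * a c0)"
  proof -
    have CU: "clone E u v = G1 \<union> (`) g ` G1" unfolding clone_def G1_def g_def by simp
    have CI: "G1 \<inter> (`) g ` G1 = E0"
    proof
      show "G1 \<inter> (`) g ` G1 \<subseteq> E0" unfolding G1_def E0_def using m1 by auto
      show "E0 \<subseteq> G1 \<inter> (`) g ` G1"
      proof
        fix e assume e: "e \<in> E0"
        then have "e \<in> G1" "g ` e = e" using fix0 unfolding E0_def G1_def by auto
        then show "e \<in> G1 \<inter> (`) g ` G1" by (metis IntI image_eqI)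
      qed
    qed
    have sp: "\<And>c. ?P (G1 \<union> (`) g ` G1) c \<longleftrightarrow> ?P G1 c \<or> ?P ((`) g ` G1) c"
    proof (rule has_copy_split[OF uv])
      show "\<forall>e\<in>G1. v \<notin> e" unfolding G1_def by auto
      show "\<forall>e\<in>(`) g ` G1. u \<notin> e" unfolding G1_def using m1 by auto
      show "{e \<in> G1. u \<notin> e} \<subseteq> (`) g ` G1"
      proof
        fix e assume "e \<in> {e \<in> G1. u \<notin> e}"
        then have "e \<in> E0" unfolding E0_def G1_def by auto
        then show "e \<in> (`) g ` G1" using CI by blast
      qed
      show "{e \<in> (`) g ` G1. v \<notin> e} \<subseteq> G1"
      proof
        fix e assume "e \<in> {e \<in> (`) g ` G1. v \<notin> e}"
        then obtain h where h: "h \<in> G1" "e = g ` h" "v \<notin> e" by auto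
        then have "u \<notin> h" using m2 by auto
        then have "h \<in> E0" using h(1) unfolding G1_def E0_def by auto
        then show "e \<in> G1" using fix0 h unfolding E0_def G1_def by auto
      qed
    qed
    have fr: "\<And>c0. card {c \<in> colorings r ((`) g ` G1). \<not> ?P ((`) g ` G1) c \<and> restrict c E0 = c0} = a c0"
      unfolding a_def by (rule fiber_relabel[OF inv _ fix0]) (auto simp: E0_def G1_def)
    have aa: "\<And>c0. card {c \<in> colorings r G1. \<not> ?P G1 c \<and> restrict c E0 = c0} = a c0"
      by (simp add: a_def)
    have L: "card {c \<in> colorings r (G1 \<union> (`) g ` G1). \<not> ?P (G1 \<union> (`) g ` G1) c} =
      (\<Sum>c0\<in>colorings r E0.
        card {c \<in> colorings r G1. \<not> ?P G1 c \<and> restrict c E0 = c0} *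
        card {c \<in> colorings r ((`) g ` G1). \<not> ?P ((`) g ` G1) c \<and> restrict c E0 = c0})"
      using L1[of G1 "(`) g ` G1" ?P r, OF fin1(1) finite_imageI[OF fin1(1)] loc sp]
      by (simp only: CI)
    show ?thesis unfolding count_free_def CU L by (simp only: fr aa)
  qed
  have cV: "count_free r k F (clone E v u) = (\<Sum>c0\<in>colorings r E0. b c0 * b c0)"
  proof -
    have gvu: "sw v u = g" unfolding g_def by (rule sw_comm)
    have CU: "clone E v u = (`) g ` G2 \<union> G2" unfolding clone_def G2_def gvu by auto
    have CI: "(`) g ` G2 \<inter> G2 = E0"
    proof
      show "(`) g ` G2 \<inter> G2 \<subseteq> E0" unfolding G2_def E0_def using m2 by auto
      show "E0 \<subseteq> (`) g ` G2 \<inter> G2"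
      proof
        fix e assume e: "e \<in> E0"
        then have "e \<in> G2" "g ` e = e" using fix0 unfolding E0_def G2_def by auto
        then show "e \<in> (`) g ` G2 \<inter> G2" by (metis IntI image_eqI)
      qed
    qed
    have sp: "\<And>c. ?P ((`) g ` G2 \<union> G2) c \<longleftrightarrow> ?P ((`) g ` G2) c \<or> ?P G2 c"
    proof (rule has_copy_split[OF uv])
      show "\<forall>e\<in>G2. u \<notin> e" unfolding G2_def by auto
      show "\<forall>e\<in>(`) g ` G2. v \<notin> e" unfolding G2_def using m2 by auto
      show "{e \<in> G2. v \<notin> e} \<subseteq> (`) g ` G2"
      proof
        fix e assume "e \<in> {e \<in> G2. v \<notin> e}"
        then have "e \<in> E0" unfolding E0_def G2_def by auto
        then show "e \<in> (`) g ` G2" using CI by blast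
      qed
      show "{e \<in> (`) g ` G2. u \<notin> e} \<subseteq> G2"
      proof
        fix e assume "e \<in> {e \<in> (`) g ` G2. u \<notin> e}"
        then obtain h where h: "h \<in> G2" "e = g ` h" "u \<notin> e" by auto
        then have "v \<notin> h" using m1 by auto
        then have "h \<in> E0" using h(1) unfolding G2_def E0_def by auto
        then show "e \<in> G2" using fix0 h unfolding E0_def G2_def by auto
      qed
    qed
    have fr: "\<And>c0. card {c \<in> colorings r ((`) g ` G2). \<not> ?P ((`) g ` G2) c \<and> restrict c E0 = c0} = b c0"
      unfolding b_def by (rule fiber_relabel[OF inv _ fix0]) (auto simp: E0_def G2_def)
    have bb: "\<And>c0. card {c \<in> colorings r G2. \<not> ?P G2 c \<and> restrict c E0 = c0} = b c0"
      by (simp add: b_def)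
    have L: "card {c \<in> colorings r ((`) g ` G2 \<union> G2). \<not> ?P ((`) g ` G2 \<union> G2) c} =
      (\<Sum>c0\<in>colorings r E0.
        card {c \<in> colorings r ((`) g ` G2). \<not> ?P ((`) g ` G2) c \<and> restrict c E0 = c0} *
        card {c \<in> colorings r G2. \<not> ?P G2 c \<and> restrict c E0 = c0})"
      using L1[of "(`) g ` G2" G2 ?P r, OF finite_imageI[OF fin1(2)] fin1(2) loc sp]
      by (simp only: CI)
    show ?thesis unfolding count_free_def CU L by (simp only: fr bb)
  qed
  have "2 * (\<Sum>c0\<in>colorings r E0. a c0 * b c0) \<le> (\<Sum>c0\<in>colorings r E0. a c0 * a c0) + (\<Sum>c0\<in>colorings r E0. b c0 * b c0)"
  proof -
    have "\<And>x y :: nat. 2 * (x * y) \<le> x * x + y * y"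
    proof -
      fix x y :: nat
      have "(int x - int y) * (int x - int y) \<ge> 0" by simp
      then have "2 * (int x * int y) \<le> int x * int x + int y * int y" by (simp add: algebra_simps)
      then have "int (2 * (x * y)) \<le> int (x * x + y * y)" by simp
      then show "2 * (x * y) \<le> x * x + y * y" by (simp only: of_nat_le_iff)
    qed
    then have "(\<Sum>c0\<in>colorings r E0. 2 * (a c0 * b c0)) \<le> (\<Sum>c0\<in>colorings r E0. a c0 * a c0 + b c0 * b c0)"
      by (rule sum_mono)
    then show ?thesis by (simp add: sum_distrib_left sum.distrib)
  qed
  then show ?thesis using cE cU cV by simp
qed

lemma sw_img_img: "sw u v ` sw u v ` A = A"
  by (simp add: image_image sw_inv)

lemma sw_img_mem: "(sw u v ` e \<in> (`) (sw u v) ` G) \<longleftrightarrow> e \<in> G"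
proof -
  have "inj ((`) (sw u v))"
  proof (rule injI)
    fix A B assume "sw u v ` A = sw u v ` B"
    then have "sw u v ` sw u v ` A = sw u v ` sw u v ` B" by simp
    then show "A = B" by (simp only: sw_img_img)
  qed
  then show ?thesis by (simp add: inj_image_mem_iff)
qed

lemma clone_other:
  assumes "v \<notin> e"
  shows "e \<in> clone E u v \<longleftrightarrow> e \<in> E"
proof
  assume "e \<in> clone E u v"
  then consider "e \<in> E" | h where "h \<in> E" "v \<notin> h" "e = sw u v ` h" unfolding clone_def by blast
  then show "e \<in> E"
  proof cases
    case 2
    then have "v \<notin> sw u v ` h" using assms by simp
    then have "u \<notin> h" using sw_mem2[where u=u and v=v and h=h] by blast
    then have "sw u v ` h = h" using 2 sw_fix by blast
    then show ?thesis using 2 by simp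
  qed simp
next
  assume "e \<in> E" then show "e \<in> clone E u v" using assms unfolding clone_def by blast
qed

lemma clone_edge:
  assumes uv: "u \<noteq> v" and yv: "y \<noteq> v" and c2: "\<forall>e\<in>E. card e = 2"
  shows "{v, y} \<in> clone E u v \<longleftrightarrow> {u, y} \<in> E"
proof -
  have "{v,y} \<in> clone E u v \<longleftrightarrow> {v,y} \<in> (`) (sw u v) ` {e\<in>E. v \<notin> e}"
    unfolding clone_def by blast
  also have "\<dots> \<longleftrightarrow> sw u v ` {v,y} \<in> {e\<in>E. v \<notin> e}"
    using sw_img_mem[of u v "sw u v ` {v,y}" "{e\<in>E. v \<notin> e}"] by (simp only: sw_img_img)
  also have "sw u v ` {v,y} = {u, sw u v y}" by (simp only: image_insert image_empty) (simp add: sw_def)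
  also have "({u, sw u v y} \<in> {e\<in>E. v \<notin> e}) \<longleftrightarrow> {u, y} \<in> E"
  proof (cases "y = u")
    case True
    have "card {u} = 1" by simp
    then have "{u} \<notin> E" using c2 by auto
    then show ?thesis using True by (simp add: sw_def)
  next
    case False
    then have "sw u v y = y" using yv by (simp add: sw_def)
    then show ?thesis using uv yv by simp
  qed
  finally show ?thesis .
qed

lemma pairs_finite: "finite (pairs {..<(n::nat)})"
  unfolding pairs_def by (rule finite_subset[of _ "Pow {..<n}"]) auto

lemma graphs_finite: "finite {E. graph_on n E}"
  unfolding graph_on_def using pairs_finite by (simp add: finite_subset)

lemma count_le_max: "graph_on n E \<Longrightarrow> count_free r k F E \<le> max_count_free r k F n"
  unfolding max_count_free_def using graphs_finite by (intro Max_ge) auto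

lemma exists_extremal: "\<exists>E. extremal r k F n E"
proof -
  have "{E. graph_on n E} \<noteq> {}" by (auto simp: graph_on_def)
  then have "max_count_free r k F n \<in> count_free r k F ` {E. graph_on n E}"
    unfolding max_count_free_def using graphs_finite by (intro Max_in) auto
  then show ?thesis unfolding extremal_def by auto
qed

lemma graph_card2: "graph_on n E \<Longrightarrow> \<forall>e\<in>E. card e = 2"
  unfolding graph_on_def pairs_def by auto

lemma clone_graph:
  assumes g: "graph_on n E" and u: "u < n" and v: "v < n"
  shows "graph_on n (clone E u v)"
  unfolding graph_on_def
proof
  fix e assume "e \<in> clone E u v"
  then consider "e \<in> E" | h where "h \<in> E" "e = sw u v ` h" unfolding clone_def by blast
  then show "e \<in> pairs {..<n}"
  proof cases
    case 1 then show ?thesis using g unfolding graph_on_def by auto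
  next
    case 2
    then have h: "h \<subseteq> {..<n}" "card h = 2" using g unfolding graph_on_def pairs_def by auto
    have "inj (sw u v)" by (metis inj_def sw_inv)
    then have "card e = 2" using 2 h by (simp add: card_image inj_on_subset)
    moreover have "e \<subseteq> {..<n}" using 2 h u v by (auto simp: sw_def)
    ultimately show ?thesis by (simp add: pairs_def)
  qed
qed

lemma extremal_clone:
  assumes ex: "extremal r k F n E" and u: "u < n" and v: "v < n" and uv: "u \<noteq> v"
    and nuv: "{u, v} \<notin> E"
  shows "extremal r k F n (clone E u v)"
proof -
  have g: "graph_on n E" and cE: "count_free r k F E = max_count_free r k F n"
    using ex unfolding extremal_def by auto
  have finE: "finite E" using g pairs_finite unfolding graph_on_def by (rule finite_subset)
  have ineq: "2 * count_free r k F E \<le> count_free r k F (clone E u v) + count_free r k F (clone E v u)"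
    by (rule key_ineq[OF uv finE nuv graph_card2[OF g]])
  have g1: "graph_on n (clone E u v)" by (rule clone_graph[OF g u v])
  have g2: "graph_on n (clone E v u)" by (rule clone_graph[OF g v u])
  have "count_free r k F (clone E u v) \<le> max_count_free r k F n" by (rule count_le_max[OF g1])
  moreover have "count_free r k F (clone E v u) \<le> max_count_free r k F n" by (rule count_le_max[OF g2])
  ultimately have "count_free r k F (clone E u v) = max_count_free r k F n" using ineq cE by linarith
  then show ?thesis unfolding extremal_def using g1 by simp
qed

lemma main_induct:
  "m \<le> n \<Longrightarrow> \<exists>E p. extremal r k F n E \<and> (\<forall>x<m. \<forall>y<m. {x,y} \<in> E \<longleftrightarrow> p x \<noteq> (p y :: nat))"
proof (induction m)
  case 0
  then show ?case using exists_extremal by auto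
next
  case (Suc m)
  then obtain E p where ex: "extremal r k F n E"
    and inv: "\<forall>x<m. \<forall>y<m. {x,y} \<in> E \<longleftrightarrow> p x \<noteq> (p y :: nat)" by auto
  have mn: "m < n" using Suc.prems by simp
  have g: "graph_on n E" using ex unfolding extremal_def by auto
  have c2: "\<forall>e\<in>E. card e = 2" by (rule graph_card2[OF g])
  have single: "\<And>x. {x} \<notin> E"
  proof
    fix x assume "{x} \<in> E"
    then have "card {x} = 2" using c2 by blast
    then show False by simp
  qed
  show ?case
  proof (cases "\<exists>x<m. {x, m} \<notin> E")
    case True
    then obtain x where x: "x < m" "{x, m} \<notin> E" by auto
    define E' where "E' = clone E x m"
    define p' where "p' = p(m := p x)"
    have ex': "extremal r k F n E'" unfolding E'_def
      by (rule extremal_clone[OF ex]) (use x mn in auto)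
    have "\<forall>a<Suc m. \<forall>b<Suc m. {a,b} \<in> E' \<longleftrightarrow> p' a \<noteq> p' b"
    proof (intro allI impI)
      fix a b assume a: "a < Suc m" and b: "b < Suc m"
      have key: "\<And>y. y < m \<Longrightarrow> {m, y} \<in> E' \<longleftrightarrow> p' m \<noteq> p' y"
      proof -
        fix y assume y: "y < m"
        have "{m, y} \<in> E' \<longleftrightarrow> {x, y} \<in> E" unfolding E'_def
          by (rule clone_edge[OF _ _ c2]) (use x y in auto)
        also have "\<dots> \<longleftrightarrow> p x \<noteq> p y" using inv x y by auto
        finally show "{m, y} \<in> E' \<longleftrightarrow> p' m \<noteq> p' y" unfolding p'_def using y by simp
      qed
      consider "a < m \<and> b < m" | "a = m \<and> b = m" | "a = m \<and> b < m" | "a < m \<and> b = m"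
        using a b by linarith
      then show "{a,b} \<in> E' \<longleftrightarrow> p' a \<noteq> p' b"
      proof cases
        case 1
        then have "{a,b} \<in> E' \<longleftrightarrow> {a,b} \<in> E" unfolding E'_def by (intro clone_other) auto
        then show ?thesis using inv 1 unfolding p'_def by auto
      next
        case 2
        have c2': "\<forall>e\<in>E'. card e = 2" using ex' graph_card2 unfolding extremal_def by blast
        have "{m} \<notin> E'"
        proof
          assume "{m} \<in> E'"
          then have "card {m} = 2" using c2' by blast
          then show False by simp
        qed
        then show ?thesis using 2 by simp
      next
        case 3 then show ?thesis using key by simp
      next
        case 4
        then have "{a,b} = {m,a}" by auto
        then show ?thesis using key[of a] 4 by auto
      qed
    qed
    then show ?thesis using ex' by blast
  next
    case False
    then have adj: "\<And>x. x < m \<Longrightarrow> {x, m} \<in> E" by auto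
    define p' where "p' = p(m := Suc (\<Sum>x<m. p x))"
    have big: "\<And>y. y < m \<Longrightarrow> p y < Suc (\<Sum>x<m. p x)"
    proof -
      fix y assume "y < m"
      then have "p y \<le> (\<Sum>x<m. p x)" by (intro member_le_sum) auto
      then show "p y < Suc (\<Sum>x<m. p x)" by simp
    qed
    have "\<forall>a<Suc m. \<forall>b<Suc m. {a,b} \<in> E \<longleftrightarrow> p' a \<noteq> p' b"
    proof (intro allI impI)
      fix a b assume a: "a < Suc m" and b: "b < Suc m"
      consider "a < m \<and> b < m" | "a = m \<and> b = m" | "a = m \<and> b < m" | "a < m \<and> b = m"
        using a b by linarith
      then show "{a,b} \<in> E \<longleftrightarrow> p' a \<noteq> p' b"
      proof cases
        case 1 then show ?thesis using inv unfolding p'_def by auto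
      next
        case 2 then show ?thesis using single by simp
      next
        case 3
        then have "{a,b} \<in> E" using adj by (simp add: insert_commute)
        moreover have "p' a \<noteq> p' b" using 3 big[of b] unfolding p'_def by auto
        ultimately show ?thesis by simp
      next
        case 4
        then have "{a,b} \<in> E" using adj by simp
        moreover have "p' a \<noteq> p' b" using 4 big[of a] unfolding p'_def by auto
        ultimately show ?thesis by simp
      qed
    qed
    then show ?thesis using ex by blast
  qed
qed

theorem theorem1p1:
  fixes r k :: nat and F :: "nat set \<Rightarrow> nat"
  assumes "r \<ge> 2" and "k \<ge> 3"
    and "F \<in> colorings r (pairs {..<k})"
  shows "\<forall>n. \<exists>E. complete_multipartite n E \<and> extremal r k F n E"
proof
  fix n
  obtain E p where ex: "extremal r k F n E"
    and inv: "\<forall>x<n. \<forall>y<n. {x,y} \<in> E \<longleftrightarrow> p x \<noteq> (p y :: nat)"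
    using main_induct[of n n r k F] by auto
  have g: "E \<subseteq> pairs {..<n}" using ex unfolding extremal_def graph_on_def by auto
  have "E = {{u, v} | u v. u < n \<and> v < n \<and> p u \<noteq> p v}"
  proof
    show "E \<subseteq> {{u, v} | u v. u < n \<and> v < n \<and> p u \<noteq> p v}"
    proof
      fix e assume e: "e \<in> E"
      then have "e \<subseteq> {..<n}" "card e = 2" using g unfolding pairs_def by auto
      then obtain a b where ab: "e = {a,b}" "a \<noteq> b" "a < n" "b < n"
        unfolding card_2_iff by auto
      then have "p a \<noteq> p b" using inv e by auto
      then show "e \<in> {{u, v} | u v. u < n \<and> v < n \<and> p u \<noteq> p v}" using ab by blast
    qed
    show "{{u, v} | u v. u < n \<and> v < n \<and> p u \<noteq> p v} \<subseteq> E" using inv by blast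
  qed
  then have "complete_multipartite n E" unfolding complete_multipartite_def by blast
  then show "\<exists>E. complete_multipartite n E \<and> extremal r k F n E" using ex by blast
qed

end
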